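(* Consider an execution of the convergence algorithm described in the context, with $n>5f$ robots of which at most $f$ are Byzantine and $m$ are correct, in the CORDA model under a fully asynchronous scheduler. Let $b>0$. Let $D_i$ be a destination computed by a correct robot $i$ in a cycle started at time $t$ (i.e., whose Look occurred at time $t$). If $D_i<\min UD(t)+b$, then at time $t$ at least $m-2f$ correct robots are located at positions $<\min UD(t)+2b$.
   Context: Setting: $n$ robots on the real line, at most $f$ Byzantine (arbitrary positions). Robots are anonymous, oblivious, have no common orientation, and have unlimited visibility with strong multiplicity detection. Correct robots run Look–Compute–Move cycles in the CORDA model, where phases of different robots interleave arbitrarily. Algorithm: with snapshot sorted $P_1\le\dots\le P_n$ and own position $x_i$, robot $i$ is elected iff $x_i\le P_{f+1}$ or $x_i\ge P_{n-f}$. If elected, its destination is the midpoint of $\min(x_i,P_{2f+1})$ and $\max(x_i,P_{n-2f})$, which is the center of $trim^i_{2f}(P)$ (remove, among the $2f$ smallest positions, those below $x_i$, and, among the $2f$ largest positions, those above $x_i$). Notation: the destination of a correct robot at time $t$ is the last destination it computed at or before $t$ (its position if none). $UD(t)$ is the multiset union of positions and destinations of all correct robots at time $t$. *)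

theory Defs
  imports Complex_Main "HOL-Library.Multiset"
begin

text \<open>Configuration at the Look time t. Robots are indexed 0..n-1; pos j is the position
of robot j at time t (arbitrary for Byzantine robots); C is the set of correct robots.\<close>

definition snapshot :: "nat \<Rightarrow> (nat \<Rightarrow> real) \<Rightarrow> real list" where
  "snapshot n pos = sort (map pos [0..<n])"

text \<open>P_k, 1-indexed: the k-th smallest position of the snapshot.\<close>
definition P :: "nat \<Rightarrow> (nat \<Rightarrow> real) \<Rightarrow> nat \<Rightarrow> real" where
  "P n pos k = snapshot n pos ! (k - 1)"

definition elected :: "nat \<Rightarrow> nat \<Rightarrow> (nat \<Rightarrow> real) \<Rightarrow> nat \<Rightarrow> bool" where
  "elected n f pos i \<longleftrightarrow> pos i \<le> P n pos (f + 1) \<or> pos i \<ge> P n pos (n - f)"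

definition destination :: "nat \<Rightarrow> nat \<Rightarrow> (nat \<Rightarrow> real) \<Rightarrow> nat \<Rightarrow> real" where
  "destination n f pos i =
     (min (pos i) (P n pos (2 * f + 1)) + max (pos i) (P n pos (n - 2 * f))) / 2"

definition UD :: "nat set \<Rightarrow> (nat \<Rightarrow> real) \<Rightarrow> (nat \<Rightarrow> real) \<Rightarrow> real multiset" where
  "UD C pos dest = image_mset pos (mset_set C) + image_mset dest (mset_set C)"

end

theory Submission
  imports Defs
begin

lemma cnt_eq: "length (filter Q (snapshot n pos)) = card {j. j < n \<and> Q (pos j)}"
proof -
  have "length (filter Q (snapshot n pos)) = length (filter Q (map pos [0..<n]))"
    unfolding snapshot_def
    by (metis mset_filter mset_sort size_mset)
  also have "\<dots> = card {j. j < n \<and> Q (pos j)}"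
    by (simp add: length_filter_conv_card cong: conj_cong)
  finally show ?thesis .
qed

lemma lemA:
  assumes "1 \<le> k" "k \<le> n"
  shows "k \<le> card {j. j < n \<and> pos j \<le> P n pos k}"
proof -
  let ?xs = "snapshot n pos"
  have len: "length ?xs = n" by (simp add: snapshot_def)
  have sorted: "sorted ?xs" by (simp add: snapshot_def)
  have all: "\<forall>x\<in>set (take k ?xs). x \<le> P n pos k"
  proof
    fix x assume "x \<in> set (take k ?xs)"
    then obtain l where l: "l < length (take k ?xs)" "x = take k ?xs ! l"
      by (metis in_set_conv_nth)
    hence "l < k" "l \<le> k - 1" using len assms by auto
    hence "x = ?xs ! l" using l by simp
    moreover have "?xs ! l \<le> ?xs ! (k - 1)"
      using sorted \<open>l \<le> k - 1\<close> len assms by (intro sorted_nth_mono) auto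
    ultimately show "x \<le> P n pos k" by (simp add: P_def)
  qed
  have "k = length (filter (\<lambda>x. x \<le> P n pos k) (take k ?xs))"
    using all len assms by (simp add: filter_True)
  also have "\<dots> \<le> length (filter (\<lambda>x. x \<le> P n pos k) ?xs)"
    by (metis append_take_drop_id filter_append length_append le_add1)
  also have "\<dots> = card {j. j < n \<and> pos j \<le> P n pos k}" by (rule cnt_eq)
  finally show ?thesis .
qed

lemma half_aux: "((a::real) + c) / 2 < M + b \<Longrightarrow> M \<le> a \<Longrightarrow> c < M + 2 * b"
proof -
  assume "(a + c) / 2 < M + b" "M \<le> a"
  moreover have "(a + c) / 2 = a/2 + c/2" by simp
  ultimately show ?thesis by linarith
qed

theorem lemma12:
  fixes n f m :: nat and C :: "nat set" and pos dest :: "nat \<Rightarrow> real"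
    and i :: nat and b :: real
  assumes "n > 5 * f"
    and "C \<subseteq> {..<n}" and "card C = m" and "n - m \<le> f"
    and "i \<in> C" and "elected n f pos i"
    and "b > 0"
    and "destination n f pos i < Min_mset (UD C pos dest) + b"
  shows "card {j \<in> C. pos j < Min_mset (UD C pos dest) + 2 * b} \<ge> m - 2 * f"
proof -
  define M where "M = Min_mset (UD C pos dest)"
  have finC: "finite C" using assms(2) finite_subset by blast
  have mn: "m \<le> n" using assms(2,3) by (metis card_lessThan card_mono finite_lessThan)
  have ne: "UD C pos dest \<noteq> {#}" using assms(5) finC by (auto simp: UD_def mset_set_empty_iff)
  have posM: "\<And>j. j \<in> C \<Longrightarrow> M \<le> pos j"
  proof -
    fix j assume "j \<in> C"
    hence "pos j \<in># UD C pos dest" using finC by (auto simp: UD_def)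
    thus "M \<le> pos j" unfolding M_def by simp
  qed
  have nc: "card ({..<n} - C) \<le> f"
    using assms(2,3,4) finC by (simp add: card_Diff_subset)
  have P1: "M \<le> P n pos (2*f+1)"
  proof (rule ccontr)
    assume "\<not> ?thesis"
    hence "{j. j < n \<and> pos j \<le> P n pos (2*f+1)} \<subseteq> {..<n} - C"
      using posM by force
    hence "card {j. j < n \<and> pos j \<le> P n pos (2*f+1)} \<le> card ({..<n} - C)"
      by (intro card_mono) auto
    moreover have "2*f+1 \<le> card {j. j < n \<and> pos j \<le> P n pos (2*f+1)}"
      using assms(1) by (intro lemA) auto
    ultimately show False using nc by linarith
  qed
  have "M \<le> min (pos i) (P n pos (2*f+1))" using P1 posM[OF assms(5)] by simp
  hence P2: "P n pos (n - 2*f) < M + 2*b"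
  proof -
    have "max (pos i) (P n pos (n - 2*f)) < M + 2*b"
      using assms(8) \<open>M \<le> min (pos i) (P n pos (2*f+1))\<close>
      unfolding destination_def M_def[symmetric]
      by (rule half_aux)
    thus ?thesis by linarith
  qed
  have "n - 2*f \<le> card {j. j < n \<and> pos j \<le> P n pos (n - 2*f)}"
    using assms(1) by (intro lemA) auto
  also have "\<dots> \<le> card {j. j < n \<and> pos j < M + 2*b}"
    using P2 by (intro card_mono) auto
  also have "{j. j < n \<and> pos j < M + 2*b} \<subseteq> {j \<in> C. pos j < M + 2*b} \<union> ({..<n} - C)"
    by auto
  hence "card {j. j < n \<and> pos j < M + 2*b} \<le> card {j \<in> C. pos j < M + 2*b} + card ({..<n} - C)"
  proof -
    have "card {j. j < n \<and> pos j < M + 2*b} \<le> card ({j \<in> C. pos j < M + 2*b} \<union> ({..<n} - C))"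
      using \<open>{j. j < n \<and> pos j < M + 2*b} \<subseteq> _\<close> finC by (intro card_mono) auto
    also have "\<dots> \<le> card {j \<in> C. pos j < M + 2*b} + card ({..<n} - C)"
      by (rule card_Un_le)
    finally show ?thesis .
  qed
  finally have "n - 2*f \<le> card {j \<in> C. pos j < M + 2*b} + card ({..<n} - C)" .
  moreover have "card ({..<n} - C) = n - m"
    using assms(2,3) finC by (simp add: card_Diff_subset)
  ultimately show ?thesis using mn unfolding M_def[symmetric] by linarith
qed

end
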